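(* Let $g,h\in\mathbb{R}[x]$ be polynomials of degree at least one and let $f=gh$, $n=\deg f$. Then the number of real numbers $x$ satisfying both (a) $g(x)=\pm1$ or $h(x)=\pm1$, and (b) $f(x)>1$, is at most $n$. *)

theory Defs
  imports "HOL-Computational_Algebra.Polynomial"
begin

end

theory Submission
  imports Defs
begin

definition fsm :: "(real \<Rightarrow> real) \<Rightarrow> (real \<Rightarrow> nat) \<Rightarrow> bool" where
  "fsm H R \<longleftrightarrow> (\<forall>x y. x < y \<longrightarrow> R x = R y \<longrightarrow>
     ((\<forall>s t. x \<le> s \<and> s < t \<and> t \<le> y \<longrightarrow> H s < H t) \<or>
      (\<forall>s t. x \<le> s \<and> s < t \<and> t \<le> y \<longrightarrow> H s > H t)))"

lemma fsm_neg: assumes "fsm H R" shows "fsm (\<lambda>x. - H x) R"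
  unfolding fsm_def
proof (intro allI impI)
  fix x y assume a: "x < y" "R x = R y"
  then have "(\<forall>s t. x \<le> s \<and> s < t \<and> t \<le> y \<longrightarrow> H s < H t) \<or>
      (\<forall>s t. x \<le> s \<and> s < t \<and> t \<le> y \<longrightarrow> H s > H t)"
    using assms unfolding fsm_def by blast
  then show "(\<forall>s t. x \<le> s \<and> s < t \<and> t \<le> y \<longrightarrow> - H s < - H t) \<or>
      (\<forall>s t. x \<le> s \<and> s < t \<and> t \<le> y \<longrightarrow> - H s > - H t)"
    by auto
qed

lemma core:
  assumes sm: "fsm H R" and pq: "p < q" and Hp: "H p < -1" and Hq: "H q > 1"
    and tau: "p < \<tau>" "\<tau> < q" "H \<tau> = -1"
    and sig: "R \<sigma> = R \<tau>" "H \<sigma> = 1 \<or> H \<sigma> = -1"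
  shows "p < \<sigma> \<and> \<sigma> < q"
proof (cases "\<sigma> = \<tau>")
  case True then show ?thesis using tau by auto
next
  case False
  show ?thesis
  proof (cases "\<tau> < \<sigma>")
    case True
    from sm[unfolded fsm_def, rule_format, OF True sig(1)[symmetric]]
    have m: "(\<forall>s t. \<tau> \<le> s \<and> s < t \<and> t \<le> \<sigma> \<longrightarrow> H s < H t) \<or>
      (\<forall>s t. \<tau> \<le> s \<and> s < t \<and> t \<le> \<sigma> \<longrightarrow> H s > H t)" .
    have inc: "\<forall>s t. \<tau> \<le> s \<and> s < t \<and> t \<le> \<sigma> \<longrightarrow> H s < H t"
    proof (rule ccontr)
      assume "\<not> ?thesis"
      with m have "H \<tau> > H \<sigma>" using True by auto
      with sig tau show False by auto
    qed
    then have "H \<tau> < H \<sigma>" using True by auto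
    then have "H \<sigma> > -1" using tau by auto
    with sig have Hs: "H \<sigma> = 1" by auto
    have "\<sigma> < q"
    proof (rule ccontr)
      assume "\<not> \<sigma> < q"
      then have "q = \<sigma> \<or> q < \<sigma>" by auto
      then show False
      proof
        assume "q = \<sigma>" with Hs Hq show False by auto
      next
        assume "q < \<sigma>"
        then have "H q < H \<sigma>" using inc[rule_format, of q \<sigma>] tau by auto
        with Hs Hq show False by auto
      qed
    qed
    then show ?thesis using True tau by auto
  next
    case False2: False
    with False have lt: "\<sigma> < \<tau>" by auto
    from sm[unfolded fsm_def, rule_format, OF lt sig(1)]
    have m: "(\<forall>s t. \<sigma> \<le> s \<and> s < t \<and> t \<le> \<tau> \<longrightarrow> H s < H t) \<or>
      (\<forall>s t. \<sigma> \<le> s \<and> s < t \<and> t \<le> \<tau> \<longrightarrow> H s > H t)" .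
    have dec: "\<forall>s t. \<sigma> \<le> s \<and> s < t \<and> t \<le> \<tau> \<longrightarrow> H s > H t"
    proof (rule ccontr)
      assume "\<not> ?thesis"
      with m have "H \<tau> > H \<sigma>" using lt by auto
      with sig tau show False by auto
    qed
    then have "H \<sigma> > H \<tau>" using lt by auto
    then have "H \<sigma> > -1" using tau by auto
    with sig have Hs: "H \<sigma> = 1" by auto
    have "p < \<sigma>"
    proof (rule ccontr)
      assume "\<not> p < \<sigma>"
      then have "p = \<sigma> \<or> \<sigma> < p" by auto
      then show False
      proof
        assume "p = \<sigma>" with Hs Hp show False by auto
      next
        assume "\<sigma> < p"
        then have "H p > H \<tau>" using dec[rule_format, of p \<tau>] tau by auto
        with Hp tau show False by auto
      qed
    qed
    then show ?thesis using lt tau by auto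
  qed
qed

lemma exT:
  fixes G H :: "real \<Rightarrow> real" and Rg Rh :: "real \<Rightarrow> nat"
  assumes contH: "\<And>a b. continuous_on {a..b} H"
    and smg: "fsm G Rg" and smh: "fsm H Rh" and monoRg: "mono Rg"
    and pq: "p < q" and Gp: "G p = 1 \<or> G p = -1" and Gq: "G q = 1 \<or> G q = -1"
    and fp: "G p * H p > 1" and fq: "G q * H q > 1"
    and Rp: "Rg p = k" and Rq: "Rg q = k"
  shows "\<exists>\<tau>. (H \<tau> = 1 \<or> H \<tau> = -1) \<and> (\<forall>\<sigma>. Rh \<sigma> = Rh \<tau> \<and> (H \<sigma> = 1 \<or> H \<sigma> = -1)
            \<longrightarrow> Rg \<sigma> = k \<and> \<not> (G \<sigma> * H \<sigma> > 1))"
proof -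
  from smg[unfolded fsm_def, rule_format, OF pq] Rp Rq
  have m: "(\<forall>s t. p \<le> s \<and> s < t \<and> t \<le> q \<longrightarrow> G s < G t) \<or>
      (\<forall>s t. p \<le> s \<and> s < t \<and> t \<le> q \<longrightarrow> G s > G t)" by auto
  have inside: "Rg t = k \<and> \<not> (G t * H t > 1)" if t: "p < t" "t < q" "H t = 1 \<or> H t = -1" for t
  proof
    have "Rg p \<le> Rg t" "Rg t \<le> Rg q" using monoRg t unfolding mono_def by auto
    then show "Rg t = k" using Rp Rq by auto
    have "G p < G t \<and> G t < G q \<or> G p > G t \<and> G t > G q" using m t pq by auto
    then have "\<bar>G t\<bar> < 1" using Gp Gq by auto
    then have "\<bar>G t * H t\<bar> < 1" using t(3) by (auto simp: abs_mult)
    then show "\<not> (G t * H t > 1)" by auto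
  qed
  have "G p \<noteq> G q" using m pq by force
  then have cases: "(G p = -1 \<and> G q = 1) \<or> (G p = 1 \<and> G q = -1)" using Gp Gq by auto
  then show ?thesis
  proof
    assume c: "G p = -1 \<and> G q = 1"
    then have Hp: "H p < -1" and Hq: "H q > 1" using fp fq by auto
    obtain \<tau> where t: "p \<le> \<tau>" "\<tau> \<le> q" "H \<tau> = -1"
      using IVT'[of H p "-1" q] Hp Hq pq contH by force
    have t2: "p < \<tau>" "\<tau> < q" using t Hp Hq by (auto simp: order.order_iff_strict)
    have "\<forall>\<sigma>. Rh \<sigma> = Rh \<tau> \<and> (H \<sigma> = 1 \<or> H \<sigma> = -1)
            \<longrightarrow> Rg \<sigma> = k \<and> \<not> (G \<sigma> * H \<sigma> > 1)"
    proof (intro allI impI)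
      fix \<sigma> assume s: "Rh \<sigma> = Rh \<tau> \<and> (H \<sigma> = 1 \<or> H \<sigma> = -1)"
      have "p < \<sigma> \<and> \<sigma> < q" using core[OF smh pq Hp Hq t2 t(3)] s by auto
      then show "Rg \<sigma> = k \<and> \<not> (G \<sigma> * H \<sigma> > 1)" using inside s by auto
    qed
    then show ?thesis using t by blast
  next
    assume c: "G p = 1 \<and> G q = -1"
    then have Hp: "H p > 1" and Hq: "H q < -1" using fp fq by auto
    obtain \<tau> where t: "p \<le> \<tau>" "\<tau> \<le> q" "H \<tau> = 1"
      using IVT2'[of H q 1 p] Hp Hq pq contH by force
    have t2: "p < \<tau>" "\<tau> < q" using t Hp Hq by (auto simp: order.order_iff_strict)
    have "\<forall>\<sigma>. Rh \<sigma> = Rh \<tau> \<and> (H \<sigma> = 1 \<or> H \<sigma> = -1)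
            \<longrightarrow> Rg \<sigma> = k \<and> \<not> (G \<sigma> * H \<sigma> > 1)"
    proof (intro allI impI)
      fix \<sigma> assume s: "Rh \<sigma> = Rh \<tau> \<and> (H \<sigma> = 1 \<or> H \<sigma> = -1)"
      have "p < \<sigma> \<and> \<sigma> < q"
        using core[OF fsm_neg[OF smh] pq, of \<tau> \<sigma>] Hp Hq t2 t(3) s by auto
      then show "Rg \<sigma> = k \<and> \<not> (G \<sigma> * H \<sigma> > 1)" using inside s by auto
    qed
    then show ?thesis using t by blast
  qed
qed


lemma Dcount:
  fixes G H F :: "real \<Rightarrow> real" and Rg Rh :: "real \<Rightarrow> nat"
  assumes contH: "\<And>a b. continuous_on {a..b} H"
    and smg: "fsm G Rg" and smh: "fsm H Rh" and monoRg: "mono Rg"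
    and bh: "\<And>x. Rh x \<le> mh"
    and finG: "finite {x. G x = 1 \<or> G x = -1}"
    and Fd: "\<And>x. F x = G x * H x"
  shows "card {k\<in>{..mg}. 2 \<le> card {x. (G x = 1 \<or> G x = -1) \<and> F x > 1 \<and> Rg x = k}}
       \<le> card {l\<in>{..mh}. {x. (H x = 1 \<or> H x = -1) \<and> F x > 1 \<and> Rh x = l} = {}}"
proof -
  let ?A = "\<lambda>k. {x. (G x = 1 \<or> G x = -1) \<and> F x > 1 \<and> Rg x = k}"
  let ?T = "\<lambda>k \<tau>. (H \<tau> = 1 \<or> H \<tau> = -1) \<and> (\<forall>\<sigma>. Rh \<sigma> = Rh \<tau> \<and> (H \<sigma> = 1 \<or> H \<sigma> = -1)
            \<longrightarrow> Rg \<sigma> = k \<and> \<not> (G \<sigma> * H \<sigma> > 1))"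
  define D where "D = {k\<in>{..mg}. 2 \<le> card (?A k)}"
  define Z where "Z = {l\<in>{..mh}. {x. (H x = 1 \<or> H x = -1) \<and> F x > 1 \<and> Rh x = l} = {}}"
  have exk: "\<exists>\<tau>. ?T k \<tau>" if k2: "2 \<le> card (?A k)" for k
  proof -
    have fin: "finite (?A k)" by (rule finite_subset[OF _ finG]) auto
    have "\<not> card (?A k) \<le> Suc 0" using k2 by auto
    then obtain p q where pq: "p \<in> ?A k" "q \<in> ?A k" "p \<noteq> q"
      using card_le_Suc0_iff_eq[OF fin] by blast
    show ?thesis
    proof (cases "p < q")
      case True
      show ?thesis
        by (rule exT[OF contH smg smh monoRg True]) (use pq Fd in simp_all)
    next
      case False
      then have "q < p" using pq by auto
      show ?thesis
        by (rule exT[OF contH smg smh monoRg \<open>q < p\<close>]) (use pq Fd in simp_all)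
    qed
  qed
  define \<phi> where "\<phi> k = Rh (SOME \<tau>. ?T k \<tau>)" for k
  have T\<phi>: "?T k (SOME \<tau>. ?T k \<tau>)" if "k \<in> D" for k
  proof -
    have "2 \<le> card (?A k)" using that unfolding D_def by simp
    then have "\<exists>\<tau>. ?T k \<tau>" by (rule exk)
    then show ?thesis by (rule someI_ex)
  qed
  have inj: "inj_on \<phi> D"
  proof (rule inj_onI)
    fix k k' assume k: "k \<in> D" and k': "k' \<in> D" and e: "\<phi> k = \<phi> k'"
    define \<tau> where "\<tau> = (SOME \<tau>. ?T k \<tau>)"
    define \<tau>' where "\<tau>' = (SOME \<tau>. ?T k' \<tau>)"
    have T1: "?T k \<tau>" using T\<phi>[OF k] unfolding \<tau>_def .
    have T2: "?T k' \<tau>'" using T\<phi>[OF k'] unfolding \<tau>'_def .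
    have "Rh \<tau>' = Rh \<tau>" using e unfolding \<phi>_def \<tau>_def \<tau>'_def by simp
    moreover have "H \<tau>' = 1 \<or> H \<tau>' = -1" using T2 by (rule conjunct1)
    ultimately have "Rg \<tau>' = k" using conjunct2[OF T1, rule_format, of \<tau>'] by blast
    moreover have "Rg \<tau>' = k'" using conjunct2[OF T2, rule_format, of \<tau>'] conjunct1[OF T2] by blast
    ultimately show "k = k'" by simp
  qed
  have img: "\<phi> ` D \<subseteq> Z"
  proof
    fix l assume "l \<in> \<phi> ` D"
    then obtain k where k: "k \<in> D" and l: "l = \<phi> k" by auto
    define \<tau> where "\<tau> = (SOME \<tau>. ?T k \<tau>)"
    have T1: "?T k \<tau>" using T\<phi>[OF k] unfolding \<tau>_def .
    have "l = Rh \<tau>" using l unfolding \<phi>_def \<tau>_def by simp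
    have "{x. (H x = 1 \<or> H x = -1) \<and> F x > 1 \<and> Rh x = l} = {}"
    proof (rule equals0I)
      fix x assume x: "x \<in> {x. (H x = 1 \<or> H x = -1) \<and> F x > 1 \<and> Rh x = l}"
      then have "Rh x = Rh \<tau> \<and> (H x = 1 \<or> H x = -1)" using \<open>l = Rh \<tau>\<close> by simp
      then have "\<not> (G x * H x > 1)" using conjunct2[OF T1, rule_format, of x] by blast
      moreover have "F x > 1" using x by simp
      ultimately show False using Fd[of x] by simp
    qed
    moreover have "l \<le> mh" using bh \<open>l = Rh \<tau>\<close> by simp
    ultimately show "l \<in> Z" unfolding Z_def by simp
  qed
  have "card D \<le> card Z"
    by (rule card_inj_on_le[OF inj img]) (auto simp: Z_def)
  then show ?thesis unfolding D_def Z_def .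
qed

lemma fiber_le2:
  assumes smg: "fsm G Rg" and fin: "finite {x. G x = 1 \<or> G x = -1}"
  shows "card {x. (G x = 1 \<or> G x = -1) \<and> P x \<and> Rg x = k} \<le> 2"
proof -
  have one: "card {x. G x = c \<and> P x \<and> Rg x = k} \<le> 1" if c: "c = 1 \<or> c = -1" for c
  proof -
    have fin1: "finite {x. G x = c \<and> P x \<and> Rg x = k}"
      by (rule finite_subset[OF _ fin]) (use c in auto)
    have "x = y" if x: "G x = c \<and> P x \<and> Rg x = k" and y: "G y = c \<and> P y \<and> Rg y = k" for x y
    proof (rule ccontr)
      assume "x \<noteq> y"
      then have "x < y \<or> y < x" by auto
      then show False
      proof
        assume "x < y"
        have "(\<forall>s t. x \<le> s \<and> s < t \<and> t \<le> y \<longrightarrow> G s < G t) \<or>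
          (\<forall>s t. x \<le> s \<and> s < t \<and> t \<le> y \<longrightarrow> G s > G t)"
          using smg[unfolded fsm_def, rule_format, OF \<open>x < y\<close>] x y by auto
        then have "G x < G y \<or> G x > G y" using \<open>x < y\<close>
          apply (elim disjE)
           apply (drule spec[of _ x], drule spec[of _ y], simp)
          apply (drule spec[of _ x], drule spec[of _ y], simp)
          done
        then show False using x y by auto
      next
        assume "y < x"
        have "(\<forall>s t. y \<le> s \<and> s < t \<and> t \<le> x \<longrightarrow> G s < G t) \<or>
          (\<forall>s t. y \<le> s \<and> s < t \<and> t \<le> x \<longrightarrow> G s > G t)"
          using smg[unfolded fsm_def, rule_format, OF \<open>y < x\<close>] x y by auto
        then have "G y < G x \<or> G y > G x" using \<open>y < x\<close>
          apply (elim disjE)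
           apply (drule spec[of _ y], drule spec[of _ x], simp)
          apply (drule spec[of _ y], drule spec[of _ x], simp)
          done
        then show False using x y by auto
      qed
    qed
    then show ?thesis using card_le_Suc0_iff_eq[OF fin1] by auto
  qed
  have "{x. (G x = 1 \<or> G x = -1) \<and> P x \<and> Rg x = k} =
     {x. G x = 1 \<and> P x \<and> Rg x = k} \<union> {x. G x = -1 \<and> P x \<and> Rg x = k}" by auto
  then have "card {x. (G x = 1 \<or> G x = -1) \<and> P x \<and> Rg x = k} \<le>
     card {x. G x = 1 \<and> P x \<and> Rg x = k} + card {x. G x = -1 \<and> P x \<and> Rg x = k}"
    by (simp add: card_Un_le)
  then show ?thesis using one[of 1] one[of "-1"] by auto
qed

lemma sumbound:
  fixes c :: "nat \<Rightarrow> nat"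
  assumes "\<And>k. k \<le> m \<Longrightarrow> c k \<le> 2"
  shows "(\<Sum>k\<le>m. c k) + card {k\<in>{..m}. c k = 0} \<le> (m+1) + card {k\<in>{..m}. 2 \<le> c k}"
proof -
  have X: "(\<Sum>k\<le>m. c k + of_bool (c k = 0)) \<le> (\<Sum>k\<le>m. 1 + of_bool (2 \<le> c k))"
  proof (rule sum_mono)
    fix k assume "k \<in> {..m}"
    then have "c k \<le> 2" using assms by auto
    then show "c k + of_bool (c k = 0) \<le> 1 + of_bool (2 \<le> c k)" by auto
  qed
  have e1: "(\<Sum>k\<le>m. of_bool (c k = 0)) = card {k\<in>{..m}. c k = 0}"
    by (subst sum_of_bool_eq) (auto intro: arg_cong[where f=card])
  have e2: "(\<Sum>k\<le>m. of_bool (2 \<le> c k)) = card {k\<in>{..m}. 2 \<le> c k}"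
    by (subst sum_of_bool_eq) (auto intro: arg_cong[where f=card])
  have e3: "(\<Sum>k\<le>m. c k + of_bool (c k = 0)) = (\<Sum>k\<le>m. c k) + (\<Sum>k\<le>m. of_bool (c k = 0))"
    by (rule sum.distrib)
  have e4: "(\<Sum>k\<le>m. 1 + of_bool (2 \<le> c k)) = (\<Sum>k\<le>m. 1) + (\<Sum>k\<le>m. of_bool (2 \<le> c k))"
    by (rule sum.distrib)
  have e5: "(\<Sum>k\<le>m. (1::nat)) = m + 1" by simp
  from X show ?thesis unfolding e3 e4 e5 e1 e2 .
qed


lemma count:
  fixes G H :: "real \<Rightarrow> real" and Rg Rh :: "real \<Rightarrow> nat"
  assumes contG: "\<And>a b. continuous_on {a..b} G" and contH: "\<And>a b. continuous_on {a..b} H"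
    and smg: "fsm G Rg" and smh: "fsm H Rh" and monoRg: "mono Rg" and monoRh: "mono Rh"
    and bg: "\<And>x. Rg x \<le> mg" and bh: "\<And>x. Rh x \<le> mh"
    and finG: "finite {x. G x = 1 \<or> G x = -1}" and finH: "finite {x. H x = 1 \<or> H x = -1}"
  shows "card {x. (G x = 1 \<or> G x = -1 \<or> H x = 1 \<or> H x = -1) \<and> G x * H x > 1} \<le> (mg+1) + (mh+1)"
proof -
  define F where "F x = G x * H x" for x
  define A where "A = {x. (G x = 1 \<or> G x = -1) \<and> F x > 1}"
  define B where "B = {x. (H x = 1 \<or> H x = -1) \<and> F x > 1}"
  define cA where "cA k = card {x. (G x = 1 \<or> G x = -1) \<and> F x > 1 \<and> Rg x = k}" for k
  define cB where "cB l = card {x. (H x = 1 \<or> H x = -1) \<and> F x > 1 \<and> Rh x = l}" for l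
  have SAB: "{x. (G x = 1 \<or> G x = -1 \<or> H x = 1 \<or> H x = -1) \<and> G x * H x > 1} = A \<union> B"
    unfolding A_def B_def F_def by auto
  have disj: "A \<inter> B = {}" unfolding A_def B_def F_def by auto
  have finA: "finite A" by (rule finite_subset[OF _ finG]) (auto simp: A_def)
  have finB: "finite B" by (rule finite_subset[OF _ finH]) (auto simp: B_def)
  have cardA: "card A = (\<Sum>k\<le>mg. cA k)"
  proof -
    have "(\<Sum>k\<in>{..mg}. sum (\<lambda>_. 1::nat) {x \<in> A. Rg x = k}) = sum (\<lambda>_. 1) A"
      by (rule sum.group) (use finA bg in auto)
    moreover have "{x \<in> A. Rg x = k} = {x. (G x = 1 \<or> G x = -1) \<and> F x > 1 \<and> Rg x = k}" for k
      unfolding A_def by auto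
    ultimately show ?thesis unfolding cA_def by simp
  qed
  have cardB: "card B = (\<Sum>l\<le>mh. cB l)"
  proof -
    have "(\<Sum>k\<in>{..mh}. sum (\<lambda>_. 1::nat) {x \<in> B. Rh x = k}) = sum (\<lambda>_. 1) B"
      by (rule sum.group) (use finB bh in auto)
    moreover have "{x \<in> B. Rh x = k} = {x. (H x = 1 \<or> H x = -1) \<and> F x > 1 \<and> Rh x = k}" for k
      unfolding B_def by auto
    ultimately show ?thesis unfolding cB_def by simp
  qed
  have sA: "(\<Sum>k\<le>mg. cA k) + card {k\<in>{..mg}. cA k = 0} \<le> (mg+1) + card {k\<in>{..mg}. 2 \<le> cA k}"
    by (rule sumbound) (unfold cA_def, rule fiber_le2[OF smg finG])
  have sB: "(\<Sum>k\<le>mh. cB k) + card {k\<in>{..mh}. cB k = 0} \<le> (mh+1) + card {k\<in>{..mh}. 2 \<le> cB k}"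
    by (rule sumbound) (unfold cB_def, rule fiber_le2[OF smh finH])
  have fibfinA: "finite {x. (G x = 1 \<or> G x = -1) \<and> F x > 1 \<and> Rg x = k}" for k
    by (rule finite_subset[OF _ finG]) auto
  have fibfinB: "finite {x. (H x = 1 \<or> H x = -1) \<and> F x > 1 \<and> Rh x = k}" for k
    by (rule finite_subset[OF _ finH]) auto
  have d1: "card {k\<in>{..mg}. 2 \<le> cA k} \<le> card {k\<in>{..mh}. cB k = 0}"
  proof -
    have "card {k\<in>{..mg}. 2 \<le> cA k}
       \<le> card {l\<in>{..mh}. {x. (H x = 1 \<or> H x = -1) \<and> F x > 1 \<and> Rh x = l} = {}}"
      unfolding cA_def by (rule Dcount[OF contH smg smh monoRg bh finG]) (simp add: F_def)
    moreover have "{l\<in>{..mh}. {x. (H x = 1 \<or> H x = -1) \<and> F x > 1 \<and> Rh x = l} = {}}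
        = {k\<in>{..mh}. cB k = 0}"
      unfolding cB_def using fibfinB by auto
    ultimately show ?thesis by simp
  qed
  have d2: "card {k\<in>{..mh}. 2 \<le> cB k} \<le> card {k\<in>{..mg}. cA k = 0}"
  proof -
    have "card {k\<in>{..mh}. 2 \<le> cB k}
       \<le> card {l\<in>{..mg}. {x. (G x = 1 \<or> G x = -1) \<and> F x > 1 \<and> Rg x = l} = {}}"
      unfolding cB_def by (rule Dcount[OF contG smh smg monoRh bg finH]) (simp add: F_def mult.commute)
    moreover have "{l\<in>{..mg}. {x. (G x = 1 \<or> G x = -1) \<and> F x > 1 \<and> Rg x = l} = {}}
        = {k\<in>{..mg}. cA k = 0}"
      unfolding cA_def using fibfinA by auto
    ultimately show ?thesis by simp
  qed
  have "card (A \<union> B) = card A + card B" using card_Un_disjoint[OF finA finB disj] .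
  then show ?thesis unfolding SAB using cardA cardB sA sB d1 d2 by linarith
qed


lemma poly_fsm:
  fixes g :: "real poly"
  assumes nz: "pderiv g \<noteq> 0"
  shows "fsm (poly g) (\<lambda>x. card {c. poly (pderiv g) c = 0 \<and> c < x})"
  unfolding fsm_def
proof (intro allI impI)
  fix x y :: real
  assume xy: "x < y" and eq: "card {c. poly (pderiv g) c = 0 \<and> c < x} = card {c. poly (pderiv g) c = 0 \<and> c < y}"
  define d where "d = poly (pderiv g)"
  have fin: "finite {c. poly (pderiv g) c = 0 \<and> c < y}"
    by (rule finite_subset[OF _ poly_roots_finite[OF nz]]) auto
  have nr: "d c \<noteq> 0" if "x \<le> c" "c < y" for c
  proof
    assume r: "d c = 0"
    have sub: "{c. poly (pderiv g) c = 0 \<and> c < x} \<subseteq> {c. poly (pderiv g) c = 0 \<and> c < y}"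
      using xy by auto
    have i1: "c \<in> {c. poly (pderiv g) c = 0 \<and> c < y}" using r that unfolding d_def by simp
    have i2: "c \<notin> {c. poly (pderiv g) c = 0 \<and> c < x}" using that by simp
    have "{c. poly (pderiv g) c = 0 \<and> c < x} \<subset> {c. poly (pderiv g) c = 0 \<and> c < y}"
      using sub i1 i2 by blast
    from psubset_card_mono[OF fin this] eq show False by simp
  qed
  have sgn: "(\<forall>s. x \<le> s \<and> s < y \<longrightarrow> d s > 0) \<or> (\<forall>s. x \<le> s \<and> s < y \<longrightarrow> d s < 0)"
  proof (cases "d x > 0")
    case True
    have "d s > 0" if s: "x \<le> s" "s < y" for s
    proof (rule ccontr)
      assume "\<not> d s > 0"
      moreover have "d s \<noteq> 0" using nr s by blast
      ultimately have ds: "d s < 0" by linarith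
      then have "x \<noteq> s" using True by auto
      with s have "x < s" by auto
      from poly_IVT_neg[OF this] True ds obtain z where "x < z" "z < s" "poly (pderiv g) z = 0"
        unfolding d_def by auto
      with nr[of z] s show False unfolding d_def by auto
    qed
    then show ?thesis by auto
  next
    case False
    moreover have "d x \<noteq> 0" using nr[of x] xy by simp
    ultimately have dx: "d x < 0" by linarith
    have "d s < 0" if s: "x \<le> s" "s < y" for s
    proof (rule ccontr)
      assume "\<not> d s < 0"
      moreover have "d s \<noteq> 0" using nr s by blast
      ultimately have ds: "d s > 0" by linarith
      then have "x \<noteq> s" using dx by auto
      with s have "x < s" by auto
      from poly_IVT_pos[OF this] dx ds obtain z where "x < z" "z < s" "poly (pderiv g) z = 0"
        unfolding d_def by auto
      with nr[of z] s show False unfolding d_def by auto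
    qed
    then show ?thesis by auto
  qed
  have mvt: "\<exists>z. x < z \<and> z < y \<and> poly g t - poly g s = (t - s) * d z"
    if st: "x \<le> s" "s < t" "t \<le> y" for s t
  proof -
    from poly_MVT[OF st(2), of g] obtain z where "s < z" "z < t" "poly g t - poly g s = (t - s) * d z"
      unfolding d_def by auto
    moreover have "x < z" "z < y" using st \<open>s < z\<close> \<open>z < t\<close> by linarith+
    ultimately show ?thesis by blast
  qed
  from sgn show "(\<forall>s t. x \<le> s \<and> s < t \<and> t \<le> y \<longrightarrow> poly g s < poly g t) \<or>
       (\<forall>s t. x \<le> s \<and> s < t \<and> t \<le> y \<longrightarrow> poly g s > poly g t)"
  proof
    assume pos: "\<forall>s. x \<le> s \<and> s < y \<longrightarrow> d s > 0"
    have "poly g s < poly g t" if st: "x \<le> s" "s < t" "t \<le> y" for s t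
    proof -
      obtain z where z: "x < z" "z < y" "poly g t - poly g s = (t - s) * d z" using mvt[OF st] by blast
      have "d z > 0" using pos z by auto
      then have "(t - s) * d z > 0" using st by auto
      then show ?thesis using z by auto
    qed
    then show ?thesis by blast
  next
    assume neg: "\<forall>s. x \<le> s \<and> s < y \<longrightarrow> d s < 0"
    have "poly g s > poly g t" if st: "x \<le> s" "s < t" "t \<le> y" for s t
    proof -
      obtain z where z: "x < z" "z < y" "poly g t - poly g s = (t - s) * d z" using mvt[OF st] by blast
      have "d z < 0" using neg z by auto
      then have "(t - s) * d z < 0" using st by (auto simp: mult_pos_neg)
      then show ?thesis using z by auto
    qed
    then show ?thesis by blast
  qed
qed

lemma poly_facts:
  fixes g :: "real poly"
  assumes dg: "degree g \<ge> 1"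
  shows "continuous_on {a..b} (poly g)"
    and "fsm (poly g) (\<lambda>x. card {c. poly (pderiv g) c = 0 \<and> c < x})"
    and "mono (\<lambda>x. card {c. poly (pderiv g) c = 0 \<and> c < x})"
    and "\<And>x. card {c. poly (pderiv g) c = 0 \<and> c < x} \<le> degree g - 1"
    and "finite {x. poly g x = 1 \<or> poly g x = -1}"
proof -
  show "continuous_on {a..b} (poly g)" by (intro continuous_intros)
  have nz: "pderiv g \<noteq> 0" using dg pderiv_eq_0_iff[of g] by auto
  show "fsm (poly g) (\<lambda>x. card {c. poly (pderiv g) c = 0 \<and> c < x})" by (rule poly_fsm[OF nz])
  have fin: "finite {c. poly (pderiv g) c = 0 \<and> c < x}" for x
    by (rule finite_subset[OF _ poly_roots_finite[OF nz]]) auto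
  show "mono (\<lambda>x. card {c. poly (pderiv g) c = 0 \<and> c < x})"
  proof (rule monoI)
    fix x y :: real assume "x \<le> y"
    then show "card {c. poly (pderiv g) c = 0 \<and> c < x} \<le> card {c. poly (pderiv g) c = 0 \<and> c < y}"
      by (intro card_mono[OF fin]) auto
  qed
  show "card {c. poly (pderiv g) c = 0 \<and> c < x} \<le> degree g - 1" for x
  proof -
    have "card {c. poly (pderiv g) c = 0 \<and> c < x} \<le> card {c. poly (pderiv g) c = 0}"
      by (intro card_mono[OF poly_roots_finite[OF nz]]) auto
    also have "\<dots> \<le> degree (pderiv g)" by (rule card_poly_roots_bound[OF nz])
    finally show ?thesis by (simp add: degree_pderiv)
  qed
  have n1: "g - 1 \<noteq> 0"
  proof
    assume "g - 1 = 0" then have "g = 1" by simp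
    with dg show False by simp
  qed
  have n2: "g + 1 \<noteq> 0"
  proof
    assume "g + 1 = 0" then have "g = -1" by (simp add: eq_neg_iff_add_eq_0)
    with dg show False by simp
  qed
  have "{x. poly g x = 1 \<or> poly g x = -1} \<subseteq> {x. poly ((g - 1) * (g + 1)) x = 0}" by auto
  moreover have "finite {x. poly ((g - 1) * (g + 1)) x = 0}"
    by (rule poly_roots_finite) (use n1 n2 in simp)
  ultimately show "finite {x. poly g x = 1 \<or> poly g x = -1}" by (rule finite_subset)
qed

theorem mainTheorem7:
  fixes g h :: "real poly"
  assumes "degree g \<ge> 1" and "degree h \<ge> 1"
  shows "finite {x::real. (poly g x = 1 \<or> poly g x = -1 \<or> poly h x = 1 \<or> poly h x = -1)
                         \<and> poly (g * h) x > 1}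
     \<and> card {x::real. (poly g x = 1 \<or> poly g x = -1 \<or> poly h x = 1 \<or> poly h x = -1)
                         \<and> poly (g * h) x > 1} \<le> degree (g * h)"
proof
  note G = poly_facts[OF assms(1)] and H = poly_facts[OF assms(2)]
  have gnz: "g \<noteq> 0" and hnz: "h \<noteq> 0" using assms by auto
  have eq: "{x::real. (poly g x = 1 \<or> poly g x = -1 \<or> poly h x = 1 \<or> poly h x = -1)
                         \<and> poly (g * h) x > 1} =
     {x. (poly g x = 1 \<or> poly g x = -1 \<or> poly h x = 1 \<or> poly h x = -1) \<and> poly g x * poly h x > 1}"
    by simp
  show "finite {x::real. (poly g x = 1 \<or> poly g x = -1 \<or> poly h x = 1 \<or> poly h x = -1)
                         \<and> poly (g * h) x > 1}"
    by (rule finite_subset[OF _ finite_UnI[OF G(5) H(5)]]) auto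
  have "card {x. (poly g x = 1 \<or> poly g x = -1 \<or> poly h x = 1 \<or> poly h x = -1) \<and> poly g x * poly h x > 1}
     \<le> (degree g - 1 + 1) + (degree h - 1 + 1)"
    by (rule count[OF G(1) H(1) G(2) H(2) G(3) H(3) G(4) H(4) G(5) H(5)])
  also have "\<dots> = degree (g * h)" using assms by (simp add: degree_mult_eq[OF gnz hnz])
  finally show "card {x::real. (poly g x = 1 \<or> poly g x = -1 \<or> poly h x = 1 \<or> poly h x = -1)
                         \<and> poly (g * h) x > 1} \<le> degree (g * h)" unfolding eq .
qed

end
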